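(* Let $\mathcal{G}$ be a $k$-uniform hypergraph with $n$ vertices. Then for every $j\in V(\mathcal{G})$, \[ \alpha_j(\mathcal{G})\leq\frac{(k-1)d_j}{n-1}. \]
   Context: A $k$-uniform hypergraph $\mathcal{G}$ has vertex set $V(\mathcal{G})=[n]$ and edge set $E(\mathcal{G})$ of $k$-element subsets of $V(\mathcal{G})$; $d_j$ is the number of edges containing vertex $j$. For $\mathbf{x}\in\mathbb{R}^n$, $\mathcal{L}_\mathcal{G}\mathbf{x}^k=\sum_{\{i_1,\ldots,i_k\}\in E(\mathcal{G})}\left(x_{i_1}^k+\cdots+x_{i_k}^k-k\,x_{i_1}\cdots x_{i_k}\right)$; the inverse Perron value of vertex $j$ is $\alpha_j(\mathcal{G})=\min\{\mathcal{L}_\mathcal{G}\mathbf{x}^k : \mathbf{x}\in\mathbb{R}^n_+,\ \sum_{i=1}^n x_i^k=1,\ x_j=0\}$. *)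

theory Defs
  imports Complex_Main
begin

definition uniform_hypergraph :: "nat \<Rightarrow> nat \<Rightarrow> nat set set \<Rightarrow> bool" where
  "uniform_hypergraph n k E \<longleftrightarrow> (\<forall>e\<in>E. e \<subseteq> {1..n} \<and> card e = k)"

definition hdegree :: "nat set set \<Rightarrow> nat \<Rightarrow> nat" where
  "hdegree E j = card {e\<in>E. j \<in> e}"

definition lap_form :: "nat \<Rightarrow> nat set set \<Rightarrow> (nat \<Rightarrow> real) \<Rightarrow> real" where
  "lap_form k E x = (\<Sum>e\<in>E. (\<Sum>i\<in>e. x i ^ k) - real k * (\<Prod>i\<in>e. x i))"

text \<open>Inverse Perron value alpha_j: minimum of L_G x^k over nonnegative x in R^n
  with sum x_i^k = 1 and x_j = 0 (written as an infimum, which is attained).\<close>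
definition inv_perron :: "nat \<Rightarrow> nat \<Rightarrow> nat set set \<Rightarrow> nat \<Rightarrow> real" where
  "inv_perron n k E j = Inf {lap_form k E x | x.
      (\<forall>i\<in>{1..n}. x i \<ge> 0) \<and> (\<forall>i. i \<notin> {1..n} \<longrightarrow> x i = 0) \<and>
      (\<Sum>i=1..n. x i ^ k) = 1 \<and> x j = 0}"

end

theory Submission
  imports Defs
begin

theorem theorem3p6:
  fixes n k :: nat and E :: "nat set set" and j :: nat
  assumes "k \<ge> 2" and "n \<ge> 2"
    and "uniform_hypergraph n k E"
    and "j \<in> {1..n}"
  shows "inv_perron n k E j \<le> real (k - 1) * real (hdegree E j) / real (n - 1)"
proof -
  have hE: "\<And>e. e \<in> E \<Longrightarrow> e \<subseteq> {1..n} \<and> card e = k"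
    using assms(3) unfolding uniform_hypergraph_def by blast
  have finE: "finite E"
    by (rule finite_subset[of E "Pow {1..n}"]) (use hE in auto)
  define c where "c = root k (1 / (real n - 1))"
  have kpos: "0 < k" using assms(1) by simp
  have c0: "c \<ge> 0" unfolding c_def using assms(2) by (intro real_root_ge_zero) simp
  have ck: "c ^ k = 1 / (real n - 1)"
    unfolding c_def using assms(2) kpos by (simp add: real_root_pow_pos2)
  define x where "x i = (if i \<in> {1..n} \<and> i \<noteq> j then c else 0)" for i
  let ?S = "{lap_form k E x | x.
      (\<forall>i\<in>{1..n}. x i \<ge> 0) \<and> (\<forall>i. i \<notin> {1..n} \<longrightarrow> x i = 0) \<and>
      (\<Sum>i=1..n. x i ^ k) = 1 \<and> x j = 0}"
  have bdd: "bdd_below ?S"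
  proof (rule bdd_belowI[of _ "- real k * real (card E)"])
    fix v assume "v \<in> ?S"
    then obtain y where y: "\<forall>i\<in>{1..n}. y i \<ge> 0" "\<forall>i. i \<notin> {1..n} \<longrightarrow> y i = 0"
      "(\<Sum>i=1..n. y i ^ k) = 1" and v: "v = lap_form k E y" by blast
    have y0: "y i \<ge> 0" for i using y by (cases "i \<in> {1..n}") auto
    have y1: "y i \<le> 1" for i
    proof (cases "i \<in> {1..n}")
      case True
      have "y i ^ k \<le> (\<Sum>i=1..n. y i ^ k)"
        by (rule member_le_sum) (use True y0 in auto)
      hence "y i ^ k \<le> 1" using y(3) by simp
      thus ?thesis using y0[of i] kpos
        by (metis not_le one_less_power not_gr0 less_irrefl)
    next
      case False then show ?thesis using y by auto
    qed
    have "(\<Sum>e\<in>E. - real k) \<le> lap_form k E y"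
      unfolding lap_form_def
    proof (rule sum_mono)
      fix e assume "e \<in> E"
      have "(\<Prod>i\<in>e. y i) \<le> 1" by (rule prod_le_1) (use y0 y1 in auto)
      moreover have "(\<Sum>i\<in>e. y i ^ k) \<ge> 0" by (rule sum_nonneg) (use y0 in auto)
      ultimately show "- real k \<le> (\<Sum>i\<in>e. y i ^ k) - real k * (\<Prod>i\<in>e. y i)"
      proof -
        have "real k * (\<Prod>i\<in>e. y i) \<le> real k * 1"
          using \<open>(\<Prod>i\<in>e. y i) \<le> 1\<close> by (intro mult_left_mono) auto
        thus ?thesis using \<open>(\<Sum>i\<in>e. y i ^ k) \<ge> 0\<close> by linarith
      qed
    qed
    thus "- real k * real (card E) \<le> v" using v by (simp add: mult.commute)
  qed
  have sumx: "(\<Sum>i=1..n. x i ^ k) = 1"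
  proof -
    have "(\<Sum>i=1..n. x i ^ k) = x j ^ k + (\<Sum>i\<in>{1..n} - {j}. x i ^ k)"
      using assms(4) by (intro sum.remove) auto
    also have "\<dots> = (\<Sum>i\<in>{1..n} - {j}. c ^ k)"
      using kpos by (simp add: x_def)
    also have "\<dots> = (real n - 1) * (1 / (real n - 1))"
      using assms(4) by (simp add: ck of_nat_diff)
    also have "\<dots> = 1" using assms(2) by simp
    finally show ?thesis .
  qed
  have mem: "lap_form k E x \<in> ?S"
  proof -
    have "(\<forall>i\<in>{1..n}. x i \<ge> 0) \<and> (\<forall>i. i \<notin> {1..n} \<longrightarrow> x i = 0) \<and> x j = 0"
      using c0 by (simp add: x_def)
    thus ?thesis using sumx by blast
  qed
  have hterm: "(\<Sum>i\<in>e. x i ^ k) - real k * (\<Prod>i\<in>e. x i)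
      = (if j \<in> e then real (k - 1) / (real n - 1) else 0)" if e: "e \<in> E" for e
  proof -
    have sub: "e \<subseteq> {1..n}" and ce: "card e = k" using hE[OF e] by auto
    have fe: "finite e" using ce kpos card_ge_0_finite by blast
    show ?thesis
    proof (cases "j \<in> e")
      case True
      have "(\<Prod>i\<in>e. x i) = 0" using fe True by (intro prod_zero) (auto simp: x_def)
      moreover have "(\<Sum>i\<in>e. x i ^ k) = (\<Sum>i\<in>e - {j}. c ^ k)"
        using fe True kpos sub by (simp add: x_def sum.remove[of e j] subset_iff)
      moreover have "card (e - {j}) = k - 1" using True ce fe by simp
      ultimately show ?thesis using True ck by simp
    next
      case False
      have "\<And>i. i \<in> e \<Longrightarrow> x i = c" using False sub by (auto simp: x_def)
      hence "(\<Sum>i\<in>e. x i ^ k) = real k * c ^ k" "(\<Prod>i\<in>e. x i) = c ^ k"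
        using ce by auto
      thus ?thesis using False by simp
    qed
  qed
  have lap: "lap_form k E x = real (k - 1) * real (hdegree E j) / real (n - 1)"
  proof -
    have "lap_form k E x = (\<Sum>e\<in>E. if j \<in> e then real (k - 1) / (real n - 1) else 0)"
      unfolding lap_form_def using hterm by (rule sum.cong[OF refl])
    also have "\<dots> = real (card {e\<in>E. j \<in> e}) * (real (k - 1) / (real n - 1))"
      using finE by (simp add: sum.If_cases Int_def)
    finally show ?thesis using assms(2) by (simp add: hdegree_def of_nat_diff)
  qed
  show ?thesis unfolding inv_perron_def
    using cInf_lower[OF mem bdd] lap by simp
qed

end
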